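(* Let $\mathbb{P}\in\triangle(\mathcal{X}\times[L])$ with marginal $\mathbb{P}_{\rm x}$ and Bayes class-posterior $\eta^\star$, let $h,h^{(\mathrm{e})}\colon\mathcal{X}\to\mathbb{R}^L$, $s\colon\mathcal{X}\to\mathbb{R}$, and $\gamma,\gamma^{(\mathrm{e})}>0$. Suppose $0\le\ell\le B$ and the partial losses satisfy $\phi_{+1}\ge0$, $\phi_{-1}\ge0$. Then $$\frac{e^{-B/\gamma}}{2\gamma^2}\mathbb{E}_{\mathbb{P}_{\rm x}}\!\big[\phi_{+1}(s(\mathsf{X}))V(\mathsf{X})\big]+\frac{e^{-B/\gamma^{(\mathrm{e})}}}{2(\gamma^{(\mathrm{e})})^2}\mathbb{E}_{\mathbb{P}_{\rm x}}\!\big[\phi_{-1}(s(\mathsf{X}))V^{(\mathrm{e})}(\mathsf{X})\big]\le \mathcal{L}_{\mathtt{J}}(s;\gamma,\gamma^{(\mathrm{e})})-\mathcal{L}_{\mathtt{M}}(s;\gamma,\gamma^{(\mathrm{e})})$$ $$\le\frac{1}{2\gamma^2}\mathbb{E}_{\mathbb{P}_{\rm x}}\!\big[\phi_{+1}(s(\mathsf{X}))V(\mathsf{X})\big]+\frac{1}{2(\gamma^{(\mathrm{e})})^2}\mathbb{E}_{\mathbb{P}_{\rm x}}\!\big[\phi_{-1}(s(\mathsf{X}))V^{(\mathrm{e})}(\mathsf{X})\big],$$ where $V(x)=\mathrm{Var}_{\mathsf{Y}\sim\eta^\star(x)}[\ell(x,\mathsf{Y},h(x))]$ and $V^{(\m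athrm{e})}(x)=\mathrm{Var}_{\mathsf{Y}\sim\eta^\star(x)}[\ell(x,\mathsf{Y},h^{(\mathrm{e})}(x))]$.
   Context: For $\mathtt{I}\in\{\mathtt{M},\mathtt{J}\}$, $\mathcal{L}_{\mathtt{I}}(s;\gamma,\gamma^{(\mathrm{e})})=\mathbb{E}_{\mathsf{X}\sim\mathbb{P}_{\rm x}}[\tilde w_{\mathtt{I}}(\mathsf{X};\gamma)\,\phi_{+1}(s(\mathsf{X}))+\tilde w^{(\mathrm{e})}_{\mathtt{I}}(\mathsf{X};\gamma^{(\mathrm{e})})\,\phi_{-1}(s(\mathsf{X}))]$, where $\tilde w_{\mathtt{M}}(x;\gamma)=\exp(-\mathbb{E}_{\mathsf{Y}\sim\eta^\star(x)}[\ell(x,\mathsf{Y},h(x))]/\gamma)$, $\tilde w_{\mathtt{J}}(x;\gamma)=\mathbb{E}_{\mathsf{Y}\sim\eta^\star(x)}[\exp(-\ell(x,\mathsf{Y},h(x))/\gamma)]$, and $\tilde w^{(\mathrm{e})}_{\mathtt{I}}$ is defined identically with $h$ replaced by $h^{(\mathrm{e})}$. Here $\ell\colon\mathcal{X}\times[L]\times\mathbb{R}^L\to\mathbb{R}$ is a loss and $\phi_{\pm1}\colon\mathbb{R}\to\mathbb{R}$ are partial losses of a binary loss. *)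

theory Defs
  imports "HOL-Probability.Probability"
begin

(* Labels [L] are the elements of a finite type 'L; scores h(x) \<in> \<real>^L are real^'L.
   eta x :: 'L pmf is the Bayes class-posterior at x; Px is the marginal on X. *)

definition wM :: "('x \<Rightarrow> 'L pmf) \<Rightarrow> ('x \<Rightarrow> 'L \<Rightarrow> real^'L \<Rightarrow> real)
                   \<Rightarrow> ('x \<Rightarrow> real^'L) \<Rightarrow> real \<Rightarrow> 'x \<Rightarrow> real" where
  "wM eta loss h \<gamma> x = exp (- measure_pmf.expectation (eta x) (\<lambda>y. loss x y (h x)) / \<gamma>)"

definition wJ :: "('x \<Rightarrow> 'L pmf) \<Rightarrow> ('x \<Rightarrow> 'L \<Rightarrow> real^'L \<Rightarrow> real)
                   \<Rightarrow> ('x \<Rightarrow> real^'L) \<Rightarrow> real \<Rightarrow> 'x \<Rightarrow> real" where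
  "wJ eta loss h \<gamma> x = measure_pmf.expectation (eta x) (\<lambda>y. exp (- loss x y (h x) / \<gamma>))"

definition surr_loss where
  "surr_loss w Px eta loss h he \<phi>p \<phi>m s \<gamma> \<gamma>e =
     (\<integral>x. w eta loss h \<gamma> x * \<phi>p (s x) + w eta loss he \<gamma>e x * \<phi>m (s x) \<partial>Px)"

definition LM :: "'x measure \<Rightarrow> ('x \<Rightarrow> 'L pmf) \<Rightarrow> ('x \<Rightarrow> 'L \<Rightarrow> real^'L \<Rightarrow> real)
     \<Rightarrow> ('x \<Rightarrow> real^'L) \<Rightarrow> ('x \<Rightarrow> real^'L) \<Rightarrow> (real \<Rightarrow> real) \<Rightarrow> (real \<Rightarrow> real)
     \<Rightarrow> ('x \<Rightarrow> real) \<Rightarrow> real \<Rightarrow> real \<Rightarrow> real" where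
  "LM = surr_loss wM"

definition LJ :: "'x measure \<Rightarrow> ('x \<Rightarrow> 'L pmf) \<Rightarrow> ('x \<Rightarrow> 'L \<Rightarrow> real^'L \<Rightarrow> real)
     \<Rightarrow> ('x \<Rightarrow> real^'L) \<Rightarrow> ('x \<Rightarrow> real^'L) \<Rightarrow> (real \<Rightarrow> real) \<Rightarrow> (real \<Rightarrow> real)
     \<Rightarrow> ('x \<Rightarrow> real) \<Rightarrow> real \<Rightarrow> real \<Rightarrow> real" where
  "LJ = surr_loss wJ"

definition Vloss :: "('x \<Rightarrow> 'L pmf) \<Rightarrow> ('x \<Rightarrow> 'L \<Rightarrow> real^'L \<Rightarrow> real)
                   \<Rightarrow> ('x \<Rightarrow> real^'L) \<Rightarrow> 'x \<Rightarrow> real" where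
  "Vloss eta loss h x = measure_pmf.variance (eta x) (\<lambda>y. loss x y (h x))"

end

theory Submission imports Defs begin

lemma exp_taylor2:
  fixes a b M :: real
  assumes "0 \<le> a" "a \<le> M" "0 \<le> b" "b \<le> M"
  shows "exp (-M) / 2 * (a-b)^2 \<le> exp (-a) - exp (-b) + exp (-b) * (a-b)
       \<and> exp (-a) - exp (-b) + exp (-b) * (a-b) \<le> (a-b)^2 / 2"
proof (cases "a = b")
  case True then show ?thesis by simp
next
  case False
  define diff where "diff = (\<lambda>(m::nat) (t::real). (-1)^m * exp (-t))"
  have d: "\<forall>m t. m < 2 \<and> 0 \<le> t \<and> t \<le> M \<longrightarrow> DERIV (diff m) t :> diff (Suc m) t"
    unfolding diff_def by (auto intro!: derivative_eq_intros)
  obtain t where t: "(if a < b then a < t \<and> t < b else b < t \<and> t < a)"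
    and eq: "diff 0 a = (\<Sum>m<2. (diff m b / fact m) * (a - b)^m) + (diff 2 t / fact 2) * (a - b)^2"
    using Taylor[of 2 diff "diff 0" 0 M b a, OF _ refl d] assms False by auto
  have eq2: "exp (-a) - exp (-b) + exp (-b) * (a-b) = exp (-t) / 2 * (a-b)^2"
    using eq by (simp add: diff_def numeral_2_eq_2 algebra_simps)
  have t0: "0 \<le> t" "t \<le> M" using t assms by (auto split: if_splits)
  have e1: "exp (-M) \<le> exp (-t)" using t0 by simp
  have e2: "exp (-t) \<le> 1" using t0 by simp
  have sq: "0 \<le> (a-b)^2" by simp
  have "exp (-M) * (a-b)^2 \<le> exp (-t) * (a-b)^2" "exp (-t) * (a-b)^2 \<le> 1 * (a-b)^2"
    using mult_right_mono[OF e1 sq] mult_right_mono[OF e2 sq] by auto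
  then show ?thesis unfolding eq2 by auto
qed

lemma pw:
  fixes p :: "'L::finite pmf" and Z :: "'L \<Rightarrow> real" and B g :: real
  assumes Z: "\<And>y. 0 \<le> Z y" "\<And>y. Z y \<le> B" and g: "g > 0"
  shows "exp (- B / g) / (2 * g^2) * measure_pmf.variance p Z
           \<le> measure_pmf.expectation p (\<lambda>y. exp (- Z y / g)) - exp (- measure_pmf.expectation p Z / g)
       \<and> measure_pmf.expectation p (\<lambda>y. exp (- Z y / g)) - exp (- measure_pmf.expectation p Z / g)
           \<le> 1 / (2 * g^2) * measure_pmf.variance p Z"
proof -
  have int: "\<And>f::'L\<Rightarrow>real. integrable (measure_pmf p) f"
    by (rule integrable_measure_pmf_finite) simp
  define m where "m = measure_pmf.expectation p Z"
  have m0: "0 \<le> m" unfolding m_def using Z by (simp add: integral_nonneg_AE)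
  have mB: "m \<le> B" unfolding m_def
    using measure_pmf.integral_le_const[of p Z B] Z int by auto
  define D where "D = (\<lambda>y. exp (- (Z y / g)) - exp (- (m / g)) + exp (- (m / g)) * (Z y / g - m / g))"
  have ED: "measure_pmf.expectation p D
      = measure_pmf.expectation p (\<lambda>y. exp (- Z y / g)) - exp (- m / g)"
  proof -
    have "measure_pmf.expectation p D = measure_pmf.expectation p (\<lambda>y. exp (- (Z y / g))) - exp (- (m / g))
        + exp (- (m / g)) * (measure_pmf.expectation p Z / g - m / g)"
      unfolding D_def using int by (simp add: integral_diff integral_add)
    then show ?thesis by (simp add: m_def)
  qed
  have var: "measure_pmf.variance p Z = measure_pmf.expectation p (\<lambda>y. (Z y - m)^2)"
    by (simp add: m_def)
  have pt: "exp (- (B/g)) / 2 * (Z y / g - m / g)^2 \<le> D y \<and> D y \<le> (Z y / g - m / g)^2 / 2" for y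
    unfolding D_def
    by (rule exp_taylor2) (use Z g m0 mB in \<open>auto intro: divide_right_mono\<close>)
  have sq: "(Z y / g - m / g)^2 = (Z y - m)^2 / g^2" for y
    using g by (simp add: power_divide diff_divide_distrib[symmetric])
  have lo: "measure_pmf.expectation p (\<lambda>y. exp (- (B/g)) / 2 * (Z y / g - m / g)^2) \<le> measure_pmf.expectation p D"
    using pt int by (intro integral_mono) auto
  have hi: "measure_pmf.expectation p D \<le> measure_pmf.expectation p (\<lambda>y. (Z y / g - m / g)^2 / 2)"
    using pt int by (intro integral_mono) auto
  have l1: "measure_pmf.expectation p (\<lambda>y. exp (- (B/g)) / 2 * (Z y / g - m / g)^2)
     = exp (- B / g) / (2 * g^2) * measure_pmf.variance p Z"
    unfolding var sq by simp
  have h1: "measure_pmf.expectation p (\<lambda>y. (Z y / g - m / g)^2 / 2)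
     = 1 / (2 * g^2) * measure_pmf.variance p Z"
    unfolding var sq by simp
  show ?thesis using lo hi l1 h1 ED by (simp add: m_def)
qed
theorem theorem4:
  fixes Px :: "'x measure" and eta :: "'x \<Rightarrow> 'L::finite pmf"
    and loss :: "'x \<Rightarrow> 'L \<Rightarrow> real^'L \<Rightarrow> real"
    and h he :: "'x \<Rightarrow> real^'L" and s :: "'x \<Rightarrow> real"
    and \<phi>p \<phi>m :: "real \<Rightarrow> real" and \<gamma> \<gamma>e B :: real
  assumes "prob_space Px"
    and "\<gamma> > 0" and "\<gamma>e > 0"
    and "\<And>x y v. 0 \<le> loss x y v" and "\<And>x y v. loss x y v \<le> B"
    and "\<And>t. 0 \<le> \<phi>p t" and "\<And>t. 0 \<le> \<phi>m t"
    and "integrable Px (\<lambda>x. wM eta loss h \<gamma> x * \<phi>p (s x))"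
    and "integrable Px (\<lambda>x. wM eta loss he \<gamma>e x * \<phi>m (s x))"
    and "integrable Px (\<lambda>x. wJ eta loss h \<gamma> x * \<phi>p (s x))"
    and "integrable Px (\<lambda>x. wJ eta loss he \<gamma>e x * \<phi>m (s x))"
    and "integrable Px (\<lambda>x. \<phi>p (s x) * Vloss eta loss h x)"
    and "integrable Px (\<lambda>x. \<phi>m (s x) * Vloss eta loss he x)"
  shows "exp (- B / \<gamma>) / (2 * \<gamma>^2) * (\<integral>x. \<phi>p (s x) * Vloss eta loss h x \<partial>Px)
         + exp (- B / \<gamma>e) / (2 * \<gamma>e^2) * (\<integral>x. \<phi>m (s x) * Vloss eta loss he x \<partial>Px)
         \<le> LJ Px eta loss h he \<phi>p \<phi>m s \<gamma> \<gamma>e - LM Px eta loss h he \<phi>p \<phi>m s \<gamma> \<gamma>e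
       \<and> LJ Px eta loss h he \<phi>p \<phi>m s \<gamma> \<gamma>e - LM Px eta loss h he \<phi>p \<phi>m s \<gamma> \<gamma>e
         \<le> 1 / (2 * \<gamma>^2) * (\<integral>x. \<phi>p (s x) * Vloss eta loss h x \<partial>Px)
           + 1 / (2 * \<gamma>e^2) * (\<integral>x. \<phi>m (s x) * Vloss eta loss he x \<partial>Px)"
proof -
  note a = assms
  interpret P: prob_space Px by (rule assms(1))
  have pwh: "exp (- B / \<gamma>) / (2 * \<gamma>^2) * Vloss eta loss h x \<le> wJ eta loss h \<gamma> x - wM eta loss h \<gamma> x
      \<and> wJ eta loss h \<gamma> x - wM eta loss h \<gamma> x \<le> 1 / (2 * \<gamma>^2) * Vloss eta loss h x" for x
    unfolding wJ_def wM_def Vloss_def by (rule pw) (use assms in auto)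
  have pwe: "exp (- B / \<gamma>e) / (2 * \<gamma>e^2) * Vloss eta loss he x \<le> wJ eta loss he \<gamma>e x - wM eta loss he \<gamma>e x
      \<and> wJ eta loss he \<gamma>e x - wM eta loss he \<gamma>e x \<le> 1 / (2 * \<gamma>e^2) * Vloss eta loss he x" for x
    unfolding wJ_def wM_def Vloss_def by (rule pw) (use assms in auto)
  define F where "F = (\<lambda>x. (wJ eta loss h \<gamma> x - wM eta loss h \<gamma> x) * \<phi>p (s x)
       + (wJ eta loss he \<gamma>e x - wM eta loss he \<gamma>e x) * \<phi>m (s x))"
  have eq: "LJ Px eta loss h he \<phi>p \<phi>m s \<gamma> \<gamma>e - LM Px eta loss h he \<phi>p \<phi>m s \<gamma> \<gamma>e = (\<integral>x. F x \<partial>Px)"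
    unfolding LJ_def LM_def surr_loss_def F_def
    using a(8-11) by (simp add: integral_diff integral_add algebra_simps)
  have intF: "integrable Px F" unfolding F_def using a(8-11)
    by (simp add: algebra_simps)
  define c1 where "c1 = exp (- B / \<gamma>) / (2 * \<gamma>^2)"
  define c2 where "c2 = exp (- B / \<gamma>e) / (2 * \<gamma>e^2)"
  define d1 where "d1 = 1 / (2 * \<gamma>^2)"
  define d2 where "d2 = 1 / (2 * \<gamma>e^2)"
  have lo: "(\<integral>x. c1 * (\<phi>p (s x) * Vloss eta loss h x) + c2 * (\<phi>m (s x) * Vloss eta loss he x) \<partial>Px) \<le> (\<integral>x. F x \<partial>Px)"
  proof (rule integral_mono)
    show "integrable Px (\<lambda>x. c1 * (\<phi>p (s x) * Vloss eta loss h x) + c2 * (\<phi>m (s x) * Vloss eta loss he x))"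
      using a(12,13) by simp
    show "integrable Px F" by (rule intF)
    fix x
    have 1: "c1 * Vloss eta loss h x * \<phi>p (s x) \<le> (wJ eta loss h \<gamma> x - wM eta loss h \<gamma> x) * \<phi>p (s x)"
      using pwh[of x] a(6)[of "s x"] unfolding c1_def by (intro mult_right_mono) auto
    have 2: "c2 * Vloss eta loss he x * \<phi>m (s x) \<le> (wJ eta loss he \<gamma>e x - wM eta loss he \<gamma>e x) * \<phi>m (s x)"
      using pwe[of x] a(7)[of "s x"] unfolding c2_def by (intro mult_right_mono) auto
    show "c1 * (\<phi>p (s x) * Vloss eta loss h x) + c2 * (\<phi>m (s x) * Vloss eta loss he x) \<le> F x"
      using 1 2 unfolding F_def by (simp add: algebra_simps)
  qed
  have hi: "(\<integral>x. F x \<partial>Px) \<le> (\<integral>x. d1 * (\<phi>p (s x) * Vloss eta loss h x) + d2 * (\<phi>m (s x) * Vloss eta loss he x) \<partial>Px)"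
  proof (rule integral_mono)
    show "integrable Px (\<lambda>x. d1 * (\<phi>p (s x) * Vloss eta loss h x) + d2 * (\<phi>m (s x) * Vloss eta loss he x))"
      using a(12,13) by simp
    show "integrable Px F" by (rule intF)
    fix x
    have 1: "(wJ eta loss h \<gamma> x - wM eta loss h \<gamma> x) * \<phi>p (s x) \<le> d1 * Vloss eta loss h x * \<phi>p (s x)"
      using pwh[of x] a(6)[of "s x"] unfolding d1_def by (intro mult_right_mono) auto
    have 2: "(wJ eta loss he \<gamma>e x - wM eta loss he \<gamma>e x) * \<phi>m (s x) \<le> d2 * Vloss eta loss he x * \<phi>m (s x)"
      using pwe[of x] a(7)[of "s x"] unfolding d2_def by (intro mult_right_mono) auto
    show "F x \<le> d1 * (\<phi>p (s x) * Vloss eta loss h x) + d2 * (\<phi>m (s x) * Vloss eta loss he x)"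
      using 1 2 unfolding F_def by (simp add: algebra_simps)
  qed
  have e1: "(\<integral>x. c1 * (\<phi>p (s x) * Vloss eta loss h x) + c2 * (\<phi>m (s x) * Vloss eta loss he x) \<partial>Px)
     = c1 * (\<integral>x. \<phi>p (s x) * Vloss eta loss h x \<partial>Px) + c2 * (\<integral>x. \<phi>m (s x) * Vloss eta loss he x \<partial>Px)"
    using a(12,13) by simp
  have e2: "(\<integral>x. d1 * (\<phi>p (s x) * Vloss eta loss h x) + d2 * (\<phi>m (s x) * Vloss eta loss he x) \<partial>Px)
     = d1 * (\<integral>x. \<phi>p (s x) * Vloss eta loss h x \<partial>Px) + d2 * (\<integral>x. \<phi>m (s x) * Vloss eta loss he x \<partial>Px)"
    using a(12,13) by simp
  show ?thesis using lo hi e1 e2 unfolding eq c1_def c2_def d1_def d2_def by simp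
qed

end
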